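(* Let $N,k\ge1$ be integers and let $\varepsilon>0$, $A>0$, $c>0$. For $z=(x,y)\in\mathbb{R}^N\times\mathbb{R}^k$ set $\Theta(z)=c\,e^{-\varepsilon\sqrt{A+|x|^4+|y|^2}}$. Then $$\Delta_{\mathcal{G}}\Theta(z)\ge-\varepsilon\,[2(N+2)+k]\,\Theta(z)\qquad\text{for all } z\in\mathbb{R}^{N+k},$$ where $\Delta_{\mathcal{G}}=\Delta_x+|x|^2\Delta_y$.
   Context: $\Delta_x$ and $\Delta_y$ denote the Euclidean Laplacians in $x\in\mathbb{R}^N$ and $y\in\mathbb{R}^k$. *)

theory Defs
  imports "HOL-Analysis.Analysis"
begin

definition second_dir_deriv :: "('a::real_normed_vector \<Rightarrow> real) \<Rightarrow> 'a \<Rightarrow> 'a \<Rightarrow> real" where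
  "second_dir_deriv f v p = deriv (deriv (\<lambda>t. f (p + t *\<^sub>R v))) 0"

definition laplacian :: "(real^'n \<Rightarrow> real) \<Rightarrow> real^'n \<Rightarrow> real" where
  "laplacian f p = (\<Sum>i\<in>UNIV. second_dir_deriv f (axis i 1) p)"

definition grushin_laplacian :: "(real^'n \<Rightarrow> real^'k \<Rightarrow> real) \<Rightarrow> real^'n \<Rightarrow> real^'k \<Rightarrow> real" where
  "grushin_laplacian u x y =
     laplacian (\<lambda>x'. u x' y) x + (norm x)^2 * laplacian (\<lambda>y'. u x y') y"

end

theory Submission
  imports Defs
begin
lemma d2_bound:
  fixes G G1 G2 :: "real \<Rightarrow> real"
  assumes dG: "\<And>t. (G has_real_derivative G1 t) (at t)"
    and dG1: "\<And>t. (G1 has_real_derivative G2 t) (at t)"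
    and pos: "\<And>t. G t > 0" and e: "e > 0" and c: "c > 0"
  shows "deriv (deriv (\<lambda>t. c * exp (- e * sqrt (G t)))) 0
     \<ge> - e * (c * exp (- e * sqrt (G 0))) * G2 0 / (2 * sqrt (G 0))"
proof -
  define F where "F t = c * exp (- e * sqrt (G t))" for t
  define k where "k t = - e * G1 t / (2 * sqrt (G t))" for t
  have dF: "(F has_real_derivative F t * k t) (at t)" for t
    unfolding F_def k_def using pos[of t]
    by (auto intro!: derivative_eq_intros dG simp: field_simps)
  have DF: "deriv F = (\<lambda>t. F t * k t)" using dF DERIV_imp_deriv by blast
  define k1 where "k1 = - e * (G2 0 / (2 * sqrt(G 0)) - G1 0 ^2 / (4 * G 0 * sqrt (G 0)))"
  have dk: "(k has_real_derivative k1) (at 0)"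
    unfolding k_def k1_def using pos[of 0]
    by (auto intro!: derivative_eq_intros dG dG1 simp: field_simps power2_eq_square)
  have "((\<lambda>t. F t * k t) has_real_derivative F 0 * k 0 * k 0 + F 0 * k1) (at 0)"
    using DERIV_mult[OF dF dk] by (simp add: algebra_simps)
  then have D2: "deriv (deriv F) 0 = F 0 * k 0 * k 0 + F 0 * k1"
    unfolding DF by (rule DERIV_imp_deriv)
  have F0: "F 0 > 0" unfolding F_def using c by simp
  have "F 0 * k 0 * k 0 \<ge> 0" using F0 by (simp add: mult.assoc)
  moreover have "G1 0 ^2 / (4 * G 0 * sqrt (G 0)) \<ge> 0" using pos[of 0] by simp
  then have "F 0 * k1 \<ge> - e * F 0 * G2 0 / (2 * sqrt (G 0))"
    unfolding k1_def using F0 e pos[of 0]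
    by (simp add: algebra_simps)
  ultimately show ?thesis using D2 unfolding F_def[symmetric] by (simp add: F_def[symmetric])
qed

lemma norm_axis_sq:
  fixes x :: "real^'n"
  shows "norm (x + t *\<^sub>R axis i 1)^2 = norm x^2 + 2*t*(x$i) + t^2"
  unfolding power2_norm_eq_inner
  by (simp add: inner_add_left inner_add_right inner_axis inner_axis_axis inner_commute algebra_simps power2_eq_square)

lemma sum_sq_norm:
  fixes x :: "real^'n"
  shows "(\<Sum>i\<in>UNIV. (x$i)^2) = norm x^2"
  unfolding power2_norm_eq_inner inner_vec_def by (simp add: power2_eq_square)

lemma x_part:
  fixes x :: "real^'n" and i :: 'n
  assumes e: "e > 0" and A: "A > 0" and c: "c > 0" and s: "s \<ge> 0"
  shows "second_dir_deriv (\<lambda>x'. c * exp (- e * sqrt (A + (norm x')^4 + s))) (axis i 1) x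
     \<ge> - e * (c * exp (- e * sqrt (A + (norm x)^4 + s))) * (8 * (x$i)^2 + 4 * norm x^2)
          / (2 * sqrt (A + (norm x)^4 + s))"
proof -
  define q where "q = norm x ^ 2"
  define a where "a = x $ i"
  define G where "G t = A + (q + 2*t*a + t^2)^2 + s" for t :: real
  define G1 where "G1 t = 2*(q + 2*t*a + t^2)*(2*a + 2*t)" for t :: real
  define G2 where "G2 t = 2*(2*a + 2*t)^2 + 4*(q + 2*t*a + t^2)" for t :: real
  have eq: "(\<lambda>t. c * exp (- e * sqrt (A + (norm (x + t *\<^sub>R axis i 1))^4 + s)))
      = (\<lambda>t. c * exp (- e * sqrt (G t)))"
  proof
    fix t
    have "(norm (x + t *\<^sub>R axis i 1))^4 = (norm (x + t *\<^sub>R axis i 1)^2)^2" by simp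
    then show "c * exp (- e * sqrt (A + (norm (x + t *\<^sub>R axis i 1))^4 + s)) = c * exp (- e * sqrt (G t))"
      unfolding G_def q_def a_def norm_axis_sq by simp
  qed
  have dG: "(G has_real_derivative G1 t) (at t)" for t
    unfolding G_def G1_def by (auto intro!: derivative_eq_intros simp: algebra_simps)
  have dG1: "(G1 has_real_derivative G2 t) (at t)" for t
    unfolding G2_def G1_def by (auto intro!: derivative_eq_intros simp: algebra_simps power2_eq_square)
  have pos: "G t > 0" for t unfolding G_def using A s by (simp add: add_pos_nonneg)
  have "second_dir_deriv (\<lambda>x'. c * exp (- e * sqrt (A + (norm x')^4 + s))) (axis i 1) x
      = deriv (deriv (\<lambda>t. c * exp (- e * sqrt (G t)))) 0"
    unfolding second_dir_deriv_def eq by simp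
  moreover have "\<dots> \<ge> - e * (c * exp (- e * sqrt (G 0))) * G2 0 / (2 * sqrt (G 0))"
    by (rule d2_bound[OF dG dG1 pos e c])
  moreover have "G 0 = A + (norm x)^4 + s" unfolding G_def q_def by simp
  moreover have "G2 0 = 8 * (x$i)^2 + 4 * norm x^2" unfolding G2_def q_def a_def by (simp add: power2_eq_square)
  ultimately show ?thesis by simp
qed

lemma y_part:
  fixes y :: "real^'k" and i :: 'k
  assumes e: "e > 0" and A: "A > 0" and c: "c > 0" and s: "s \<ge> 0"
  shows "second_dir_deriv (\<lambda>y'. c * exp (- e * sqrt (A + s + (norm y')^2))) (axis i 1) y
     \<ge> - e * (c * exp (- e * sqrt (A + s + (norm y)^2))) * 2
          / (2 * sqrt (A + s + (norm y)^2))"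
proof -
  define q where "q = norm y ^ 2"
  define a where "a = y $ i"
  define G where "G t = A + s + (q + 2*t*a + t^2)" for t :: real
  define G1 where "G1 t = 2*a + 2*t" for t :: real
  define G2 where "G2 t = (2::real)" for t :: real
  have eq: "(\<lambda>t. c * exp (- e * sqrt (A + s + (norm (y + t *\<^sub>R axis i 1))^2)))
      = (\<lambda>t. c * exp (- e * sqrt (G t)))"
    unfolding G_def q_def a_def norm_axis_sq by simp
  have dG: "(G has_real_derivative G1 t) (at t)" for t
    unfolding G_def G1_def by (auto intro!: derivative_eq_intros simp: algebra_simps)
  have dG1: "(G1 has_real_derivative G2 t) (at t)" for t
    unfolding G2_def G1_def by (auto intro!: derivative_eq_intros simp: algebra_simps)
  have pos: "G t > 0" for t
  proof -
    have "q + 2*t*a + t^2 = norm (y + t *\<^sub>R axis i 1)^2" unfolding q_def a_def norm_axis_sq by simp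
    then show ?thesis unfolding G_def using A s by (simp add: add_pos_nonneg)
  qed
  have "second_dir_deriv (\<lambda>y'. c * exp (- e * sqrt (A + s + (norm y')^2))) (axis i 1) y
      = deriv (deriv (\<lambda>t. c * exp (- e * sqrt (G t)))) 0"
    unfolding second_dir_deriv_def eq by simp
  also have "\<dots> \<ge> - e * (c * exp (- e * sqrt (G 0))) * G2 0 / (2 * sqrt (G 0))"
    by (rule d2_bound[OF dG dG1 pos e c])
  finally show ?thesis
    unfolding G_def G2_def q_def a_def by simp
qed

theorem lemma4:
  fixes \<epsilon> A c :: real and x :: "real^'n" and y :: "real^'k"
  assumes "\<epsilon> > 0" and "A > 0" and "c > 0"
  defines "\<Theta> \<equiv> (\<lambda>(x'::real^'n) (y'::real^'k).
              c * exp (- \<epsilon> * sqrt (A + (norm x')^4 + (norm y')^2)))"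
  shows "grushin_laplacian \<Theta> x y
           \<ge> - \<epsilon> * (2 * (real CARD('n) + 2) + real CARD('k)) * \<Theta> x y"
proof -
  note e = assms(1) and Ap = assms(2) and cp = assms(3)
  define T where "T = \<Theta> x y"
  define h where "h = sqrt (A + (norm x)^4 + (norm y)^2)"
  define q where "q = norm x ^ 2"
  have T: "T = c * exp (- \<epsilon> * sqrt (A + (norm x)^4 + (norm y)^2))" unfolding T_def \<Theta>_def by simp
  have Tpos: "T > 0" using T cp by simp
  have q0: "q \<ge> 0" unfolding q_def by simp
  have x4: "(norm x)^4 = q^2" unfolding q_def by simp
  have qh: "q \<le> h" unfolding h_def x4
    by (rule real_le_rsqrt) (use Ap in simp)
  have hpos: "h > 0" unfolding h_def using Ap by (simp add: add_pos_nonneg)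
  have LX: "laplacian (\<lambda>x'. \<Theta> x' y) x \<ge> (\<Sum>i\<in>UNIV. - \<epsilon> * T * (8 * (x$i)^2 + 4 * q) / (2 * h))"
    unfolding laplacian_def
  proof (rule sum_mono)
    fix i :: 'n
    have "(\<lambda>x'. \<Theta> x' y) = (\<lambda>x'. c * exp (- \<epsilon> * sqrt (A + (norm x')^4 + (norm y)^2)))"
      unfolding \<Theta>_def by simp
    then show "- \<epsilon> * T * (8 * (x$i)^2 + 4 * q) / (2 * h) \<le> second_dir_deriv (\<lambda>x'. \<Theta> x' y) (axis i 1) x"
      using x_part[OF e Ap cp, of "(norm y)^2" x i] unfolding T h_def q_def by simp
  qed
  have "(\<Sum>i\<in>UNIV. - \<epsilon> * T * (8 * (x$i)^2 + 4 * q) / (2 * h))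
      = - \<epsilon> * T / (2 * h) * (8 * (\<Sum>i\<in>UNIV. (x$i)^2) + 4 * q * real CARD('n))"
  proof -
    define K where "K = - \<epsilon> * T / (2 * h)"
    have "(\<Sum>i\<in>UNIV. - \<epsilon> * T * (8 * (x$i)^2 + 4 * q) / (2 * h))
        = (\<Sum>i\<in>UNIV. K * (8 * (x$i)^2 + 4 * q))" unfolding K_def using hpos by (intro sum.cong refl) (simp add: field_simps)
    also have "\<dots> = K * (\<Sum>i\<in>UNIV. (8 * (x$i)^2 + 4 * q))" by (simp add: sum_distrib_left)
    also have "(\<Sum>i\<in>UNIV. (8 * (x$i)^2 + 4 * q)) = 8 * (\<Sum>i\<in>UNIV. (x$i)^2) + 4 * q * real CARD('n)"
    proof -
      have a1: "(\<Sum>i\<in>UNIV. 8 * (x$i)^2) = 8 * (\<Sum>i\<in>UNIV. (x$i)^2)" by (rule sum_distrib_left[symmetric])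
      have a2: "(\<Sum>i\<in>(UNIV::'n set). 4 * q) = 4 * q * real CARD('n)" by simp
      show ?thesis unfolding sum.distrib a1 a2 ..
    qed
    finally show ?thesis unfolding K_def .
  qed
  also have "\<dots> = - \<epsilon> * T * (2 * (real CARD('n) + 2)) * (q / h)"
    unfolding sum_sq_norm q_def[symmetric] using hpos by (simp add: field_simps)
  also have "\<dots> \<ge> - \<epsilon> * T * (2 * (real CARD('n) + 2))"
  proof -
    have r1: "q / h \<le> 1" using qh hpos by simp
    have r2: "\<epsilon> * T * (2 * (real CARD('n) + 2)) \<ge> 0" using e Tpos by simp
    have "\<epsilon> * T * (2 * (real CARD('n) + 2)) * (q / h) \<le> \<epsilon> * T * (2 * (real CARD('n) + 2)) * 1"
      by (rule mult_left_mono[OF r1 r2])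
    then show ?thesis by simp
  qed
  finally have LX2: "laplacian (\<lambda>x'. \<Theta> x' y) x \<ge> - \<epsilon> * T * (2 * (real CARD('n) + 2))"
    using LX by linarith
  have LY: "laplacian (\<lambda>y'. \<Theta> x y') y \<ge> (\<Sum>i\<in>(UNIV::'k set). - \<epsilon> * T * 2 / (2 * h))"
    unfolding laplacian_def
  proof (rule sum_mono)
    fix i :: 'k
    have "(\<lambda>y'. \<Theta> x y') = (\<lambda>y'. c * exp (- \<epsilon> * sqrt (A + (norm x)^4 + (norm y')^2)))"
      unfolding \<Theta>_def by simp
    then show "- \<epsilon> * T * 2 / (2 * h) \<le> second_dir_deriv (\<lambda>y'. \<Theta> x y') (axis i 1) y"
      using y_part[OF e Ap cp, of "(norm x)^4" y i] unfolding T h_def by simp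
  qed
  have "(\<Sum>i\<in>(UNIV::'k set). - \<epsilon> * T * 2 / (2 * h)) = - \<epsilon> * T * real CARD('k) / h"
    using hpos by simp
  with LY have LYb: "laplacian (\<lambda>y'. \<Theta> x y') y \<ge> - \<epsilon> * T * real CARD('k) / h" by (simp add: mult_ac)
  have LY2: "q * laplacian (\<lambda>y'. \<Theta> x y') y \<ge> q * (- \<epsilon> * T * real CARD('k) / h)"
    by (rule mult_left_mono[OF LYb q0])
  have "q * (- \<epsilon> * T * real CARD('k) / h) = - \<epsilon> * T * real CARD('k) * (q / h)" by simp
  also have "\<dots> \<ge> - \<epsilon> * T * real CARD('k)"
  proof -
    have r1: "q / h \<le> 1" using qh hpos by simp
    have r2: "\<epsilon> * T * real CARD('k) \<ge> 0" using e Tpos by simp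
    have "\<epsilon> * T * real CARD('k) * (q / h) \<le> \<epsilon> * T * real CARD('k) * 1"
      by (rule mult_left_mono[OF r1 r2])
    then show ?thesis by simp
  qed
  finally have LY3: "q * laplacian (\<lambda>y'. \<Theta> x y') y \<ge> - \<epsilon> * T * real CARD('k)"
    using LY2 by linarith
  have "grushin_laplacian \<Theta> x y = laplacian (\<lambda>x'. \<Theta> x' y) x + q * laplacian (\<lambda>y'. \<Theta> x y') y"
    unfolding grushin_laplacian_def q_def by simp
  also have "\<dots> \<ge> - \<epsilon> * T * (2 * (real CARD('n) + 2)) + - \<epsilon> * T * real CARD('k)"
    using LX2 LY3 by linarith
  finally show ?thesis unfolding T_def by (simp add: algebra_simps)
qed

end
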